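(* Let $n$ be even and consider the bi-party bi-objective pseudo-Boolean problem BPAOAZ on $\{0,1\}^n$ (defined in the context), whose common Pareto set is $\{1^n\}$. The expected running time of the simple evolutionary multi-party multi-objective optimizer $\text{EMPMO}_{\text{simple}}$ (with $M=2$ parties) applied to BPAOAZ is bounded by $O(3n^2\log n)$.
   Context: BPAOAZ: for $\mathbf{x}=(x_1,\dots,x_n)\in\{0,1\}^n$ with $n$ even, party 1 has the two objectives $f_{11}(\mathbf{x})=\sum_{i=n/2+1}^{n}x_i$ and $f_{12}(\mathbf{x})=\sum_{i=1}^{n/2}x_i+\sum_{i=n/2+1}^{n}(1-x_i)$; party 2 has the two objectives $f_{21}(\mathbf{x})=\sum_{i=1}^{n/2}(1-x_i)+\sum_{i=n/2+1}^{n}x_i$ and $f_{22}(\mathbf{x})=\sum_{i=1}^{n/2}x_i$. All objectives are to be maximized. Write $F_m=(f_{m1},f_{m2})$. For party $m$, $\mathbf{z}$ weakly dominates $\mathbf{x}$ ($\mathbf{z}\succeq_m\mathbf{x}$) if $f_{mk}(\mathbf{z})\ge f_{mk}(\mathbf{x})$ for $k=1,2$, and dominates it ($\mathbf{z}\succ_m\mathbf{x}$) if additionally strict inequality holds for some $k$. The Pareto set of party $m$ is the set of $\mathbf{x}$ not dominated (w.r.t. $\succ_m$) by any point of $\{0,1\}^n$; the common Pareto set is the intersection of the two parties' Pareto sets. One-bit mutation flips one uniformly random bit. $\text{EMPMO}_{\text{simple}}$: choose $\mathbf{x}$ uniformly at random from $\{0,1\}^n$; set $\Phi=\{\mathbf{x}\}$,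 $P_1=P_2=\{\mathbf{x}\}$. In each iteration, for $m=1,2$ in turn: pick $\mathbf{x}\in P_m$ uniformly at random and apply one-bit mutation to get $\mathbf{x}'$; if there is no $\mathbf{z}\in P_m$ with $\mathbf{z}\succ_m\mathbf{x}'$ or $F_m(\mathbf{z})=F_m(\mathbf{x}')$, then set $P_m\leftarrow (P_m\setminus\{\mathbf{z}\in P_m:\mathbf{x}'\succ_m\mathbf{z}\})\cup\{\mathbf{x}'\}$, and moreover, if there is no $\mathbf{z}\in\Phi$ such that for all parties $m'$ ($\mathbf{z}\succ_{m'}\mathbf{x}'$ or $F_{m'}(\mathbf{z})=F_{m'}(\mathbf{x}')$), set $\Phi\leftarrow(\Phi\setminus\{\mathbf{z}\in\Phi:\exists m''\ \mathbf{x}'\succ_{m''}\mathbf{z}\})\cup\{\mathbf{x}'\}$. The running time is the number of fitness evaluations (i.e. mutations, counting both parties' mutations) until the common Pareto-optimal solutions are found for the first time. *)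

theory Defs
  imports "HOL-Probability.Probability"
begin

text \<open>Bit strings x = (x_1,...,x_n) are boolean lists of length n; x_i is x ! (i-1),
  so the first half is the index set {..<n div 2} and the second half {n div 2..<n}.\<close>

type_synonym bits = "bool list"

definition f11 :: "nat \<Rightarrow> bits \<Rightarrow> nat" where
  "f11 n x = (\<Sum>i\<in>{n div 2..<n}. of_bool (x ! i))"

definition f12 :: "nat \<Rightarrow> bits \<Rightarrow> nat" where
  "f12 n x = (\<Sum>i<n div 2. of_bool (x ! i)) + (\<Sum>i\<in>{n div 2..<n}. of_bool (\<not> x ! i))"

definition f21 :: "nat \<Rightarrow> bits \<Rightarrow> nat" where
  "f21 n x = (\<Sum>i<n div 2. of_bool (\<not> x ! i)) + (\<Sum>i\<in>{n div 2..<n}. of_bool (x ! i))"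

definition f22 :: "nat \<Rightarrow> bits \<Rightarrow> nat" where
  "f22 n x = (\<Sum>i<n div 2. of_bool (x ! i))"

definition F :: "nat \<Rightarrow> nat \<Rightarrow> bits \<Rightarrow> nat \<times> nat" where
  "F n m x = (if m = 1 then (f11 n x, f12 n x) else (f21 n x, f22 n x))"

definition parties :: "nat set" where "parties = {1, 2}"

definition weakly_dom :: "nat \<Rightarrow> nat \<Rightarrow> bits \<Rightarrow> bits \<Rightarrow> bool" where
  "weakly_dom n m z x \<longleftrightarrow> fst (F n m z) \<ge> fst (F n m x) \<and> snd (F n m z) \<ge> snd (F n m x)"

definition dom :: "nat \<Rightarrow> nat \<Rightarrow> bits \<Rightarrow> bits \<Rightarrow> bool" where
  "dom n m z x \<longleftrightarrow> weakly_dom n m z x \<and>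
     (fst (F n m z) > fst (F n m x) \<or> snd (F n m z) > snd (F n m x))"

definition search_space :: "nat \<Rightarrow> bits set" where
  "search_space n = {x. length x = n}"

definition pareto_set :: "nat \<Rightarrow> nat \<Rightarrow> bits set" where
  "pareto_set n m = {x \<in> search_space n. \<not> (\<exists>z \<in> search_space n. dom n m z x)}"

definition common_pareto :: "nat \<Rightarrow> bits set" where
  "common_pareto n = (\<Inter>m\<in>parties. pareto_set n m)"

definition mutate :: "nat \<Rightarrow> bits \<Rightarrow> bits pmf" where
  "mutate n x = map_pmf (\<lambda>i. x[i := \<not> x ! i]) (pmf_of_set {..<n})"

text \<open>Algorithm state: (archive Phi, population P_1, population P_2).\<close>
type_synonym state = "bits set \<times> bits set \<times> bits set"

definition archive :: "state \<Rightarrow> bits set" where "archive s = fst s"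

definition pop :: "nat \<Rightarrow> state \<Rightarrow> bits set" where
  "pop m s = (if m = 1 then fst (snd s) else snd (snd s))"

definition set_pop :: "nat \<Rightarrow> bits set \<Rightarrow> state \<Rightarrow> state" where
  "set_pop m P s = (if m = 1 then (fst s, P, snd (snd s)) else (fst s, fst (snd s), P))"

definition update :: "nat \<Rightarrow> nat \<Rightarrow> bits \<Rightarrow> state \<Rightarrow> state" where
  "update n m x' s =
    (if \<not> (\<exists>z \<in> pop m s. dom n m z x' \<or> F n m z = F n m x') then
       (let s1 = set_pop m ({z \<in> pop m s. \<not> dom n m x' z} \<union> {x'}) s;
            Phi = archive s;
            Phi' = (if \<not> (\<exists>z \<in> Phi. \<forall>m'\<in>parties. dom n m' z x' \<or> F n m' z = F n m' x')
                    then {z \<in> Phi. \<not> (\<exists>m''\<in>parties. dom n m'' x' z)} \<union> {x'}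
                    else Phi)
        in (Phi', snd s1))
     else s)"

definition party_step :: "nat \<Rightarrow> nat \<Rightarrow> state \<Rightarrow> state pmf" where
  "party_step n m s =
     bind_pmf (pmf_of_set (pop m s)) (\<lambda>x. map_pmf (\<lambda>x'. update n m x' s) (mutate n x))"

definition found :: "nat \<Rightarrow> state \<Rightarrow> bool" where
  "found n s \<longleftrightarrow> common_pareto n \<subseteq> archive s"

text \<open>Joint distribution of the state after t fitness evaluations together with the flag
  "the common Pareto set has been found at some evaluation count \<le> t".
  Evaluation number t+1 is made by party 1 if t is even and by party 2 otherwise
  (each iteration = party 1's mutation followed by party 2's mutation).\<close>
fun evals :: "nat \<Rightarrow> nat \<Rightarrow> (state \<times> bool) pmf" where
  "evals n 0 = map_pmf (\<lambda>x. (({x}, {x}, {x}), found n ({x}, {x}, {x})))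
                 (pmf_of_set (search_space n))"
| "evals n (Suc t) = bind_pmf (evals n t) (\<lambda>(s, h).
      map_pmf (\<lambda>s'. (s', h \<or> found n s')) (party_step n (if even t then 1 else 2) s))"

text \<open>Expected running time E[T] of the first hitting time T (number of evaluations),
  via the tail-sum formula E[T] = sum_{t>=0} Pr[T > t] (valued in ennreal, so = \<infinity>
  if T is infinite with positive probability).\<close>
definition expected_runtime :: "nat \<Rightarrow> ennreal" where
  "expected_runtime n = (\<Sum>t. ennreal (measure_pmf.prob (evals n t) {p. \<not> snd p}))"

end

theory Submission
  imports Defs
begin


lemma harm_le_ln: "k \<ge> 1 \<Longrightarrow> (harm k :: real) \<le> 1 + ln (real k)"
proof (induction k rule: dec_induct)
  case base then show ?case by (simp add: harm_def)
next
  case (step k)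
  have k: "real k \<ge> 1" using step by simp
  have "ln (real k / (real k + 1)) \<le> real k / (real k + 1) - 1"
    by (rule ln_le_minus_one) (use k in simp)
  also have "\<dots> = - 1 / (real k + 1)" using k by (simp add: field_simps)
  finally have "1 / (real k + 1) \<le> ln (real k + 1) - ln (real k)"
    using k by (simp add: ln_div)
  moreover have "harm (Suc k) = harm k + 1 / (real k + 1)"
    by (simp add: harm_Suc field_simps)
  moreover have e: "ln (real (Suc k)) = ln (real k + 1)" by simp
  ultimately show ?case unfolding e using step.IH by linarith
qed



lemma compl_sum: "finite S \<Longrightarrow> (\<Sum>i\<in>S. of_bool (P i)::nat) + (\<Sum>i\<in>S. of_bool (\<not>P i)) = card S"
  by (induction S rule: finite_induct) (auto simp del: sum_of_bool_eq)

lemma sum_bool_le: "finite S \<Longrightarrow> (\<Sum>i\<in>S. of_bool (P i)::nat) \<le> card S"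
  using compl_sum[of S P] by linarith

lemma hle: "n div 2 \<le> (n::nat)" by simp

lemma f11_le: "f11 n x \<le> n - n div 2"
  unfolding f11_def using sum_bool_le[of "{n div 2..<n}"] by simp

lemma f22_le: "f22 n x \<le> n div 2"
  unfolding f22_def using sum_bool_le[of "{..<n div 2}"] by simp

lemma f12_eq: "f12 n x = f22 n x + (n - n div 2 - f11 n x)"
  unfolding f12_def f22_def f11_def
  using compl_sum[of "{n div 2..<n}" "\<lambda>i. x ! i"] hle[of n] by (simp del: sum_of_bool_eq; arith)

lemma f21_eq: "f21 n x = (n div 2 - f22 n x) + f11 n x"
  unfolding f21_def f22_def f11_def
  using compl_sum[of "{..<n div 2}" "\<lambda>i. x ! i"] hle[of n] by (simp del: sum_of_bool_eq; arith)

lemma sum_flip_in: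
  assumes "finite S" "i \<in> S" "i < length x" "\<not> x ! i"
  shows "(\<Sum>j\<in>S. of_bool (x[i:=True] ! j)::nat) = (\<Sum>j\<in>S. of_bool (x ! j)) + 1"
proof -
  have "(\<Sum>j\<in>S. of_bool (x[i:=True] ! j)::nat) = of_bool (x[i:=True] ! i) + (\<Sum>j\<in>S-{i}. of_bool (x[i:=True] ! j))"
    using assms by (simp add: sum.remove del: sum_of_bool_eq)
  also have "(\<Sum>j\<in>S-{i}. of_bool (x[i:=True] ! j)::nat) = (\<Sum>j\<in>S-{i}. of_bool (x ! j))"
    by (intro sum.cong refl) (metis DiffE insertI1 nth_list_update_neq)
  also have "(\<Sum>j\<in>S. of_bool (x ! j)::nat) = of_bool (x ! i) + (\<Sum>j\<in>S-{i}. of_bool (x ! j))"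
    using assms by (simp add: sum.remove del: sum_of_bool_eq)
  ultimately show ?thesis using assms by (simp del: sum_of_bool_eq)
qed

lemma sum_flip_out:
  assumes "i \<notin> S"
  shows "(\<Sum>j\<in>S. of_bool (x[i:=v] ! j)::nat) = (\<Sum>j\<in>S. of_bool (x ! j))"
  by (intro sum.cong refl) (metis assms nth_list_update_neq)

lemma flip_first:
  assumes "i < n div 2" "length x = n" "\<not> x ! i"
  shows "f22 n (x[i:=True]) = f22 n x + 1" "f11 n (x[i:=True]) = f11 n x"
  using assms sum_flip_in[of "{..<n div 2}" i x] sum_flip_out[of i "{n div 2..<n}" x True]
  unfolding f22_def f11_def by auto

lemma flip_second:
  assumes "n div 2 \<le> i" "i < n" "length x = n" "\<not> x ! i"
  shows "f11 n (x[i:=True]) = f11 n x + 1" "f22 n (x[i:=True]) = f22 n x"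
  using assms sum_flip_in[of "{n div 2..<n}" i x] sum_flip_out[of i "{..<n div 2}" x True]
  unfolding f22_def f11_def by auto

lemma ones_vals: "f22 n (replicate n True) = n div 2" "f11 n (replicate n True) = n - n div 2"
  unfolding f22_def f11_def by simp_all

lemma ones_unique:
  assumes "length z = n" "f22 n z = n div 2" "f11 n z = n - n div 2"
  shows "z = replicate n True"
proof -
  have c1: "card ({..<n div 2} \<inter> {j. z ! j}) = card {..<n div 2}"
    using assms(2) unfolding f22_def by simp
  have e1: "{..<n div 2} \<inter> {j. z ! j} = {..<n div 2}"
    by (rule card_subset_eq) (use c1 in auto)
  have c2: "card ({n div 2..<n} \<inter> {j. z ! j}) = card {n div 2..<n}"
    using assms(3) unfolding f11_def by simp
  have e2: "{n div 2..<n} \<inter> {j. z ! j} = {n div 2..<n}"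
    by (rule card_subset_eq) (use c2 in auto)
  have "\<And>j. j < n \<Longrightarrow> z ! j"
  proof -
    fix j assume "j < n"
    show "z ! j"
    proof (cases "j < n div 2")
      case True then show ?thesis using e1 by blast
    next
      case False then show ?thesis using e2 \<open>j < n\<close> by fastforce
    qed
  qed
  then show ?thesis using assms(1) by (intro nth_equalityI) auto
qed

lemma F1: "F n 1 x = (f11 n x, f12 n x)" by (simp add: F_def)
lemma F2: "m \<noteq> 1 \<Longrightarrow> F n m x = (f21 n x, f22 n x)" by (simp add: F_def)

lemma wd1:
  assumes "dom n 1 z x \<or> F n 1 z = F n 1 x"
  shows "f22 n x \<le> f22 n z"
  using assms f11_le[of n x] f11_le[of n z]
  unfolding dom_def weakly_dom_def F1 f12_eq by auto

lemma front_nodom: "f22 n z = n div 2 \<Longrightarrow> \<not> dom n 1 x z"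
  using f11_le[of n x] f11_le[of n z] f22_le[of n x] hle[of n]
  unfolding dom_def weakly_dom_def F1 f12_eq by (auto; arith)

lemma ones_nodom: "\<not> dom n m x (replicate n True)"
proof (cases "m = 1")
  case True then show ?thesis using front_nodom ones_vals by blast
next
  case False then show ?thesis
    using f11_le[of n x] f22_le[of n x] ones_vals[of n]
    unfolding dom_def weakly_dom_def F2[OF False] f21_eq by auto
qed

lemma F_ones:
  assumes "F n 1 z = F n 1 (replicate n True)" "F n 2 z = F n 2 (replicate n True)"
  shows "f22 n z = n div 2" "f11 n z = n - n div 2"
  using assms ones_vals[of n] by (auto simp: F_def)

lemma common_sub:
  assumes "x \<in> common_pareto n"
  shows "x = replicate n True"
proof (rule ccontr)
  assume ne: "x \<noteq> replicate n True"
  have p1: "x \<in> pareto_set n 1" and p2: "x \<in> pareto_set n 2"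
    using assms unfolding common_pareto_def parties_def by auto
  then have len: "length x = n" by (simp add: pareto_set_def search_space_def)
  obtain i where i: "i < n" "\<not> x ! i"
    using ne len by (metis (full_types) nth_equalityI length_replicate nth_replicate)
  define z where "z = x[i:=True]"
  have zs: "z \<in> search_space n" using len by (simp add: z_def search_space_def)
  show False
  proof (cases "i < n div 2")
    case True
    note fl = flip_first[OF True len i(2)]
    have "dom n 1 z x"
      unfolding dom_def weakly_dom_def F1 f12_eq z_def fl by auto
    then show False using p1 zs by (auto simp: pareto_set_def)
  next
    case False
    have ge: "n div 2 \<le> i" using False by simp
    note fl = flip_second[OF ge i(1) len i(2)]
    have "dom n 2 z x"
      using False f22_le[of n x] unfolding dom_def weakly_dom_def F_def f21_eq z_def fl by auto
    then show False using p2 zs by (auto simp: pareto_set_def)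
  qed
qed



definition Inv :: "nat \<Rightarrow> state \<Rightarrow> bool" where
"Inv n s \<longleftrightarrow> finite (pop 1 s) \<and> pop 1 s \<noteq> {} \<and> pop 1 s \<subseteq> search_space n \<and>
   finite (pop 2 s) \<and> pop 2 s \<noteq> {} \<and> pop 2 s \<subseteq> search_space n \<and> archive s \<subseteq> search_space n \<and>
   (\<forall>z\<in>pop 1 s. \<forall>w\<in>pop 1 s. z \<noteq> w \<longrightarrow> F n 1 z \<noteq> F n 1 w \<and> \<not> dom n 1 z w) \<and>
   (replicate n True \<in> pop 1 s \<longrightarrow> replicate n True \<in> archive s)"

definition acc :: "nat \<Rightarrow> nat \<Rightarrow> bits \<Rightarrow> state \<Rightarrow> bool" where
"acc n m x' s \<longleftrightarrow> \<not> (\<exists>z \<in> pop m s. dom n m z x' \<or> F n m z = F n m x')"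

definition newarch :: "nat \<Rightarrow> bits \<Rightarrow> bits set \<Rightarrow> bits set" where
"newarch n x' Phi = (if \<not> (\<exists>z \<in> Phi. \<forall>m'\<in>parties. dom n m' z x' \<or> F n m' z = F n m' x')
                    then {z \<in> Phi. \<not> (\<exists>m''\<in>parties. dom n m'' x' z)} \<union> {x'}
                    else Phi)"

lemma upd_pop_same:
  "m \<in> {1,2} \<Longrightarrow> pop m (update n m x' s) =
     (if acc n m x' s then {z\<in>pop m s. \<not> dom n m x' z} \<union> {x'} else pop m s)"
  unfolding update_def acc_def Let_def by (auto simp: pop_def set_pop_def)

lemma upd_pop_other:
  "m \<in> {1,2} \<Longrightarrow> m' \<in> {1,2} \<Longrightarrow> m' \<noteq> m \<Longrightarrow> pop m' (update n m x' s) = pop m' s"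
  unfolding update_def acc_def Let_def by (auto simp: pop_def set_pop_def)

lemma upd_arch:
  "archive (update n m x' s) = (if acc n m x' s then newarch n x' (archive s) else archive s)"
  unfolding update_def acc_def Let_def newarch_def by (auto simp: archive_def set_pop_def)

lemma newarch_sub: "newarch n x' Phi \<subseteq> Phi \<union> {x'}"
  unfolding newarch_def by auto

lemma newarch_ones: "replicate n True \<in> Phi \<Longrightarrow> replicate n True \<in> newarch n x' Phi"
  unfolding newarch_def using ones_nodom by auto

lemma newarch_ones2:
  assumes "Phi \<subseteq> search_space n"
  shows "replicate n True \<in> newarch n (replicate n True) Phi"
proof (cases "\<exists>z \<in> Phi. \<forall>m'\<in>parties. dom n m' z (replicate n True) \<or> F n m' z = F n m' (replicate n True)")
  case True
  then obtain z where z: "z \<in> Phi" "\<forall>m'\<in>parties. dom n m' z (replicate n True) \<or> F n m' z = F n m' (replicate n True)"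
    by blast
  then have "F n 1 z = F n 1 (replicate n True)" "F n 2 z = F n 2 (replicate n True)"
    using ones_nodom unfolding parties_def by auto
  note fo = F_ones[OF this]
  have "length z = n" using z assms by (auto simp: search_space_def)
  then have "z = replicate n True" using ones_unique fo by blast
  then show ?thesis using z True by (simp add: newarch_def)
next
  case False then show ?thesis by (simp add: newarch_def)
qed

lemma Inv_update:
  assumes inv: "Inv n s" and m: "m \<in> {1,2}" and x': "x' \<in> search_space n"
  shows "Inv n (update n m x' s)"
proof (cases "acc n m x' s")
  case False
  then have "update n m x' s = s" unfolding update_def acc_def by auto
  then show ?thesis using inv by simp
next
  case True
  let ?s' = "update n m x' s"
  have arch: "archive ?s' = newarch n x' (archive s)" using True by (simp add: upd_arch)
  have archsub: "archive ?s' \<subseteq> search_space n"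
    using arch newarch_sub[of n x' "archive s"] inv x' unfolding Inv_def by auto
  have ones_keep: "replicate n True \<in> archive s \<Longrightarrow> replicate n True \<in> archive ?s'"
    using arch newarch_ones by simp
  show ?thesis
  proof (cases "m = 1")
    case m1: True
    have p1: "pop 1 ?s' = {z\<in>pop 1 s. \<not> dom n 1 x' z} \<union> {x'}"
      using upd_pop_same[of 1 n x' s] True m1 by simp
    have p2: "pop 2 ?s' = pop 2 s" using upd_pop_other[of 1 2 n x' s] m1 by simp
    have acc1: "\<forall>z\<in>pop 1 s. \<not> dom n 1 z x' \<and> F n 1 z \<noteq> F n 1 x'"
      using True m1 unfolding acc_def by auto
    have pw: "\<forall>z\<in>pop 1 ?s'. \<forall>w\<in>pop 1 ?s'. z \<noteq> w \<longrightarrow> F n 1 z \<noteq> F n 1 w \<and> \<not> dom n 1 z w"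
      unfolding p1 using acc1 inv unfolding Inv_def by auto
    have on: "replicate n True \<in> pop 1 ?s' \<longrightarrow> replicate n True \<in> archive ?s'"
    proof
      assume "replicate n True \<in> pop 1 ?s'"
      then have "replicate n True \<in> pop 1 s \<or> x' = replicate n True" using p1 by auto
      then show "replicate n True \<in> archive ?s'"
      proof
        assume "replicate n True \<in> pop 1 s"
        then show ?thesis using inv ones_keep unfolding Inv_def by blast
      next
        assume "x' = replicate n True"
        then show ?thesis using arch newarch_ones2[of "archive s" n] inv unfolding Inv_def by simp
      qed
    qed
    have i: "finite (pop 1 s)" "pop 1 s \<subseteq> search_space n" using inv unfolding Inv_def by auto
    have "finite (pop 1 ?s')" "pop 1 ?s' \<noteq> {}" "pop 1 ?s' \<subseteq> search_space n"
      unfolding p1 using i x' by auto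
    then show ?thesis unfolding Inv_def using p2 pw on archsub inv unfolding Inv_def by simp
  next
    case m2: False
    then have m2': "m = 2" using m by simp
    have p2: "pop 2 ?s' = {z\<in>pop 2 s. \<not> dom n 2 x' z} \<union> {x'}"
      using upd_pop_same[of 2 n x' s] True m2' by simp
    have p1: "pop 1 ?s' = pop 1 s" using upd_pop_other[of 2 1 n x' s] m2' by simp
    have i: "finite (pop 2 s)" "pop 2 s \<subseteq> search_space n" using inv unfolding Inv_def by auto
    have "finite (pop 2 ?s')" "pop 2 ?s' \<noteq> {}" "pop 2 ?s' \<subseteq> search_space n"
      unfolding p2 using i x' by auto
    then show ?thesis unfolding Inv_def using p1 archsub ones_keep inv unfolding Inv_def by simp
  qed
qed



definition AM :: "nat \<Rightarrow> bits set \<Rightarrow> nat" where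
  "AM n P = Max (f22 n ` P)"
definition BM :: "nat \<Rightarrow> bits set \<Rightarrow> nat" where
  "BM n P = (if AM n P = n div 2 then Max (f11 n ` {z\<in>P. f22 n z = n div 2}) else 0)"
definition cst :: "nat \<Rightarrow> real" where
  "cst n = real ((n - n div 2 + 1) * n)"
definition gv :: "nat \<Rightarrow> bits set \<Rightarrow> real" where
  "gv n P = cst n * (harm (n div 2 - AM n P) + harm (n - n div 2 - BM n P))"

lemma cst_nonneg: "cst n \<ge> 0" by (simp add: cst_def)

lemma gv_nonneg: "gv n P \<ge> 0"
  unfolding gv_def using cst_nonneg harm_nonneg
  by (metis add_nonneg_nonneg mult_nonneg_nonneg)

lemma gv_le_max: "gv n P \<le> cst n * (harm (n div 2) + harm (n - n div 2))"
  unfolding gv_def using cst_nonneg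
  by (intro mult_left_mono add_mono harm_mono) auto

lemma AM_le: "finite P \<Longrightarrow> P \<noteq> {} \<Longrightarrow> AM n P \<le> n div 2"
  unfolding AM_def using f22_le by auto

lemma AM_ge: "finite P \<Longrightarrow> z \<in> P \<Longrightarrow> f22 n z \<le> AM n P"
  unfolding AM_def by auto

lemma AM_in: "finite P \<Longrightarrow> P \<noteq> {} \<Longrightarrow> \<exists>z\<in>P. f22 n z = AM n P"
  unfolding AM_def by (metis (mono_tags, lifting) Max_in finite_imageI image_iff image_is_empty)

lemma BM_ge: "finite P \<Longrightarrow> z \<in> P \<Longrightarrow> f22 n z = n div 2 \<Longrightarrow> AM n P = n div 2 \<Longrightarrow> f11 n z \<le> BM n P"
  unfolding BM_def by auto

lemma BM_in: "finite P \<Longrightarrow> P \<noteq> {} \<Longrightarrow> AM n P = n div 2 \<Longrightarrow>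
   \<exists>z\<in>P. f22 n z = n div 2 \<and> f11 n z = BM n P"
proof -
  assume a: "finite P" "P \<noteq> {}" "AM n P = n div 2"
  then obtain z0 where "z0 \<in> P" "f22 n z0 = n div 2" using AM_in by metis
  then have ne: "{z\<in>P. f22 n z = n div 2} \<noteq> {}" by auto
  have "Max (f11 n ` {z\<in>P. f22 n z = n div 2}) \<in> f11 n ` {z\<in>P. f22 n z = n div 2}"
    using ne a by (intro Max_in) auto
  then show ?thesis using a unfolding BM_def by auto
qed

definition succ_ok :: "nat \<Rightarrow> bits set \<Rightarrow> bits \<Rightarrow> bits set \<Rightarrow> bool" where
  "succ_ok n P x' P2 \<longleftrightarrow> finite P2 \<and> P2 \<noteq> {} \<and> (\<forall>z\<in>P. z \<in> P2 \<or> (x' \<in> P2 \<and> dom n 1 x' z))"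

lemma AM_mono:
  assumes "finite P" "P \<noteq> {}" "succ_ok n P x' P2"
  shows "AM n P \<le> AM n P2"
proof -
  obtain z0 where z0: "z0 \<in> P" "f22 n z0 = AM n P" using AM_in assms by metis
  show ?thesis
  proof (cases "z0 \<in> P2")
    case True then show ?thesis using AM_ge z0 assms unfolding succ_ok_def by metis
  next
    case False
    then have "x' \<in> P2" "dom n 1 x' z0" using assms z0 unfolding succ_ok_def by auto
    then show ?thesis using wd1[of n x' z0] AM_ge[of P2 x' n] z0 assms unfolding succ_ok_def by auto
  qed
qed

lemma BM_mono:
  assumes "finite P" "P \<noteq> {}" "succ_ok n P x' P2" "AM n P = n div 2"
  shows "AM n P2 = n div 2" "BM n P \<le> BM n P2"
proof -
  have f2: "finite P2" "P2 \<noteq> {}" using assms unfolding succ_ok_def by auto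
  show a2: "AM n P2 = n div 2" using AM_mono[OF assms(1-3)] AM_le[OF f2, of n] assms(4) by simp
  obtain z1 where z1: "z1 \<in> P" "f22 n z1 = n div 2" "f11 n z1 = BM n P" using BM_in assms by metis
  have "z1 \<in> P2" using assms(3) z1 front_nodom unfolding succ_ok_def by blast
  then show "BM n P \<le> BM n P2" using BM_ge[OF f2(1) _ z1(2) a2] z1 by simp
qed

lemma gv_mono:
  assumes "finite P" "P \<noteq> {}" "succ_ok n P x' P2"
  shows "gv n P2 \<le> gv n P"
proof -
  have A: "n div 2 - AM n P2 \<le> n div 2 - AM n P" using AM_mono[OF assms] by simp
  have B: "n - n div 2 - BM n P2 \<le> n - n div 2 - BM n P"
  proof (cases "AM n P = n div 2")
    case True then show ?thesis using BM_mono[OF assms True] by simp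
  next
    case False then show ?thesis by (simp add: BM_def)
  qed
  show ?thesis unfolding gv_def using cst_nonneg A B
    by (intro mult_left_mono add_mono harm_mono) auto
qed

lemma harm_step: "1 \<le> k \<Longrightarrow> j \<le> k - 1 \<Longrightarrow> (harm j :: real) \<le> harm k - 1 / real k"
proof -
  assume a: "1 \<le> k" "j \<le> k - 1"
  have "harm j \<le> (harm (k - 1) :: real)" using a harm_mono by blast
  moreover have "harm k = harm (k - 1) + 1 / (real k :: real)"
    using a harm_Suc[of "k - 1", where 'a=real] by (simp add: field_simps)
  ultimately show ?thesis by simp
qed

lemma gv_goodA:
  assumes "finite P" "P \<noteq> {}" "succ_ok n P x' P2" "AM n P < n div 2" "AM n P + 1 \<le> AM n P2"
  shows "gv n P2 \<le> gv n P - cst n / real (n div 2 - AM n P)"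
proof -
  have h1: "harm (n div 2 - AM n P2) \<le> harm (n div 2 - AM n P) - 1 / real (n div 2 - AM n P)"
    using assms(4,5) by (intro harm_step) auto
  have h2: "harm (n - n div 2 - BM n P2) \<le> (harm (n - n div 2 - BM n P) :: real)"
    using assms(4) by (intro harm_mono) (simp add: BM_def)
  have "gv n P2 \<le> cst n * ((harm (n div 2 - AM n P) - 1 / real (n div 2 - AM n P)) + harm (n - n div 2 - BM n P))"
    unfolding gv_def using cst_nonneg h1 h2 by (intro mult_left_mono add_mono) auto
  then show ?thesis unfolding gv_def by (simp add: algebra_simps)
qed

lemma gv_goodB:
  assumes "finite P" "P \<noteq> {}" "succ_ok n P x' P2" "AM n P = n div 2" "BM n P < n - n div 2"
     "BM n P + 1 \<le> BM n P2"
  shows "gv n P2 \<le> gv n P - cst n / real (n - n div 2 - BM n P)"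
proof -
  have a2: "AM n P2 = n div 2" using BM_mono[OF assms(1-4)] by simp
  have h2: "harm (n - n div 2 - BM n P2) \<le> harm (n - n div 2 - BM n P) - 1 / real (n - n div 2 - BM n P)"
    using assms(5,6) by (intro harm_step) auto
  have "gv n P2 \<le> cst n * (harm (n div 2 - AM n P) + (harm (n - n div 2 - BM n P) - 1 / real (n - n div 2 - BM n P)))"
    unfolding gv_def using cst_nonneg h2 a2 assms(4) by (intro mult_left_mono add_mono) auto
  then show ?thesis unfolding gv_def by (simp add: algebra_simps)
qed

lemma card_pop1:
  assumes "Inv n s"
  shows "card (pop 1 s) \<le> n - n div 2 + 1"
proof -
  let ?P = "pop 1 s"
  have pw: "\<forall>z\<in>?P. \<forall>w\<in>?P. z \<noteq> w \<longrightarrow> F n 1 z \<noteq> F n 1 w \<and> \<not> dom n 1 z w"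
    using assms unfolding Inv_def by blast
  have "inj_on (f11 n) ?P"
  proof (rule inj_onI)
    fix z w assume zw: "z \<in> ?P" "w \<in> ?P" "f11 n z = f11 n w"
    show "z = w"
    proof (rule ccontr)
      assume "z \<noteq> w"
      then have "F n 1 z \<noteq> F n 1 w" "\<not> dom n 1 z w" "\<not> dom n 1 w z" using pw zw by auto
      then show False using zw(3) unfolding F1 dom_def weakly_dom_def by auto
    qed
  qed
  moreover have "f11 n ` ?P \<subseteq> {..n - n div 2}" using f11_le by auto
  ultimately have "card ?P \<le> card {..n - n div 2}" by (intro card_inj_on_le) auto
  then show ?thesis by simp
qed



lemma avg_bound:
  fixes \<phi> :: "'a \<Rightarrow> nat \<Rightarrow> real"
  assumes "finite P" "x0 \<in> P" "finite I" "J \<subseteq> I" "card J = k" "k \<ge> 1"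
    "\<forall>x\<in>P. \<forall>i\<in>I. \<phi> x i \<le> G" "\<forall>i\<in>J. \<phi> x0 i \<le> G - d / k"
  shows "(\<Sum>x\<in>P. \<Sum>i\<in>I. \<phi> x i) \<le> real (card P) * real (card I) * G - d"
proof -
  have fJ: "finite J" using assms finite_subset by blast
  have "(\<Sum>i\<in>J. \<phi> x0 i) \<le> (\<Sum>i\<in>J. G - d / k)" using assms(8) by (intro sum_mono) auto
  also have "\<dots> = real k * G - d" using assms(5,6) by (simp add: algebra_simps)
  finally have sJ: "(\<Sum>i\<in>J. \<phi> x0 i) \<le> real k * G - d" .
  have "(\<Sum>i\<in>I-J. \<phi> x0 i) \<le> (\<Sum>i\<in>I-J. G)" using assms(2,7) by (intro sum_mono) auto
  also have "\<dots> = real (card I - k) * G" using assms fJ by (simp add: card_Diff_subset)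
  finally have sIJ: "(\<Sum>i\<in>I-J. \<phi> x0 i) \<le> real (card I - k) * G" .
  have kI: "k \<le> card I" using assms card_mono by blast
  have s0: "(\<Sum>i\<in>I. \<phi> x0 i) \<le> real (card I) * G - d"
  proof -
    have "(\<Sum>i\<in>I. \<phi> x0 i) = (\<Sum>i\<in>J. \<phi> x0 i) + (\<Sum>i\<in>I-J. \<phi> x0 i)"
      using assms(3,4) by (metis add.commute sum.subset_diff)
    also have "\<dots> \<le> real k * G - d + real (card I - k) * G" using sJ sIJ by linarith
    also have "\<dots> = real (card I) * G - d" using kI by (simp add: of_nat_diff algebra_simps)
    finally show ?thesis .
  qed
  have "(\<Sum>x\<in>P-{x0}. \<Sum>i\<in>I. \<phi> x i) \<le> (\<Sum>x\<in>P-{x0}. \<Sum>i\<in>I. G)"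
    using assms(7) by (intro sum_mono) auto
  also have "\<dots> = real (card P - 1) * real (card I) * G" using assms(1,2) by simp
  finally have s1: "(\<Sum>x\<in>P-{x0}. \<Sum>i\<in>I. \<phi> x i) \<le> real (card P - 1) * real (card I) * G" .
  have cP: "card P \<ge> 1" using assms(1,2) by (metis One_nat_def Suc_leI card_gt_0_iff empty_iff)
  have "(\<Sum>x\<in>P. \<Sum>i\<in>I. \<phi> x i) = (\<Sum>i\<in>I. \<phi> x0 i) + (\<Sum>x\<in>P-{x0}. \<Sum>i\<in>I. \<phi> x i)"
    using assms(1,2) by (simp add: sum.remove)
  also have "\<dots> \<le> real (card I) * G - d + real (card P - 1) * real (card I) * G" using s0 s1 by linarith
  also have "\<dots> = real (card P) * real (card I) * G - d" using cP by (simp add: of_nat_diff algebra_simps)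
  finally show ?thesis .
qed

lemma avg_final:
  fixes \<phi> :: "'a \<Rightarrow> nat \<Rightarrow> real"
  assumes "finite P" "P \<noteq> {}" "n > 0"
    "(\<Sum>x\<in>P. \<Sum>i\<in>{..<n}. \<phi> x i) \<le> real (card P) * real n * G - d"
    "real (card P) * real n \<le> d"
  shows "(\<Sum>x\<in>P. (\<Sum>i\<in>{..<n}. 2 * \<phi> x i + 1) / real n) / real (card P) \<le> 2 * G - 1"
proof -
  have cP: "real (card P) > 0" using assms by (simp add: card_gt_0_iff)
  have n: "real n > 0" using assms by simp
  have "(\<Sum>x\<in>P. (\<Sum>i\<in>{..<n}. 2 * \<phi> x i + 1) / real n) = (\<Sum>x\<in>P. \<Sum>i\<in>{..<n}. 2 * \<phi> x i + 1) / real n"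
    by (simp add: sum_divide_distrib)
  also have "(\<Sum>x\<in>P. \<Sum>i\<in>{..<n}. 2 * \<phi> x i + 1) = 2 * (\<Sum>x\<in>P. \<Sum>i\<in>{..<n}. \<phi> x i) + real (card P) * real n"
    by (simp add: sum.distrib sum_distrib_left)
  finally have e: "(\<Sum>x\<in>P. (\<Sum>i\<in>{..<n}. 2 * \<phi> x i + 1) / real n) =
      (2 * (\<Sum>x\<in>P. \<Sum>i\<in>{..<n}. \<phi> x i) + real (card P) * real n) / real n" .
  have "2 * (\<Sum>x\<in>P. \<Sum>i\<in>{..<n}. \<phi> x i) + real (card P) * real n \<le> real (card P) * real n * (2 * G - 1)"
    using assms(4,5) by (simp add: algebra_simps)
  then have "(2 * (\<Sum>x\<in>P. \<Sum>i\<in>{..<n}. \<phi> x i) + real (card P) * real n) / real n / real (card P) \<le> 2 * G - 1"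
    using cP n by (simp add: field_simps)
  then show ?thesis using e by simp
qed

lemma succ_upd:
  assumes "Inv n s"
  shows "succ_ok n (pop 1 s) x' (pop 1 (update n 1 x' s))"
proof -
  have i: "finite (pop 1 s)" "pop 1 s \<noteq> {}" using assms unfolding Inv_def by auto
  show ?thesis using upd_pop_same[of 1 n x' s] i unfolding succ_ok_def by auto
qed

lemma found_ones:
  assumes "Inv n s" "replicate n True \<in> pop 1 s"
  shows "found n s"
proof -
  have "replicate n True \<in> archive s" using assms unfolding Inv_def by blast
  then show ?thesis unfolding found_def using common_sub by blast
qed

lemma good_exists:
  assumes inv: "Inv n s" and nf: "\<not> found n s"
  shows "\<exists>x0\<in>pop 1 s. \<exists>J k. J \<subseteq> {..<n} \<and> card J = k \<and> k \<ge> 1 \<and>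
    (\<forall>i\<in>J. gv n (pop 1 (update n 1 (x0[i := \<not> x0 ! i]) s)) \<le> gv n (pop 1 s) - cst n / real k)"
proof -
  let ?P = "pop 1 s"
  have fP: "finite ?P" "?P \<noteq> {}" "?P \<subseteq> search_space n" using inv unfolding Inv_def by auto
  show ?thesis
  proof (cases "AM n ?P < n div 2")
    case A: True
    obtain z0 where z0: "z0 \<in> ?P" "f22 n z0 = AM n ?P" using AM_in fP by metis
    have len: "length z0 = n" using z0 fP by (auto simp: search_space_def)
    define J where "J = {..<n div 2} \<inter> {i. \<not> z0 ! i}"
    have cJ: "card J = n div 2 - AM n ?P"
      using compl_sum[of "{..<n div 2}" "\<lambda>i. z0 ! i"] z0(2) unfolding J_def f22_def
      by (simp only: sum_of_bool_eq finite_lessThan card_lessThan) simp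
    have good: "gv n (pop 1 (update n 1 (z0[i := \<not> z0 ! i]) s)) \<le> gv n ?P - cst n / real (n div 2 - AM n ?P)"
      if i: "i \<in> J" for i
    proof -
      have i1: "i < n div 2" "\<not> z0 ! i" using i unfolding J_def by auto
      define x' where "x' = z0[i := True]"
      have xe: "z0[i := \<not> z0 ! i] = x'" using i1 by (simp add: x'_def)
      note fl = flip_first[OF i1(1) len i1(2)]
      have ac: "acc n 1 x' s"
        unfolding acc_def
      proof
        assume "\<exists>z\<in>?P. dom n 1 z x' \<or> F n 1 z = F n 1 x'"
        then obtain z where "z \<in> ?P" "dom n 1 z x' \<or> F n 1 z = F n 1 x'" by blast
        then show False using wd1[of n z x'] AM_ge[OF fP(1), of z n] fl z0(2) unfolding x'_def by simp
      qed
      then have xin: "x' \<in> pop 1 (update n 1 x' s)" using upd_pop_same[of 1 n x' s] by simp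
      have so: "succ_ok n ?P x' (pop 1 (update n 1 x' s))" using succ_upd[OF inv] .
      then have "finite (pop 1 (update n 1 x' s))" unfolding succ_ok_def by simp
      then have "AM n ?P + 1 \<le> AM n (pop 1 (update n 1 x' s))"
        using AM_ge[of _ x' n] xin fl z0(2) unfolding x'_def by fastforce
      then show ?thesis unfolding xe using gv_goodA[OF fP(1,2) so A] by blast
    qed
    show ?thesis
      by (rule bexI[OF _ z0(1)], rule exI[of _ J], rule exI[of _ "n div 2 - AM n ?P"])
         (use cJ good A in \<open>auto simp: J_def\<close>)
  next
    case False
    then have A: "AM n ?P = n div 2" using AM_le[OF fP(1,2), of n] by simp
    obtain z1 where z1: "z1 \<in> ?P" "f22 n z1 = n div 2" "f11 n z1 = BM n ?P" using BM_in[OF fP(1,2) A] by blast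
    have len: "length z1 = n" using z1 fP by (auto simp: search_space_def)
    have B: "BM n ?P < n - n div 2"
    proof (rule ccontr)
      assume "\<not> BM n ?P < n - n div 2"
      then have "f11 n z1 = n - n div 2" using z1 f11_le[of n z1] by simp
      then have "z1 = replicate n True" using ones_unique len z1 by blast
      then show False using found_ones[OF inv] z1 nf by simp
    qed
    define J where "J = {n div 2..<n} \<inter> {i. \<not> z1 ! i}"
    have cJ: "card J = n - n div 2 - BM n ?P"
      using compl_sum[of "{n div 2..<n}" "\<lambda>i. z1 ! i"] z1(3) unfolding J_def f11_def
      by (simp only: sum_of_bool_eq finite_atLeastLessThan card_atLeastLessThan) simp
    have good: "gv n (pop 1 (update n 1 (z1[i := \<not> z1 ! i]) s)) \<le> gv n ?P - cst n / real (n - n div 2 - BM n ?P)"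
      if i: "i \<in> J" for i
    proof -
      have i1: "n div 2 \<le> i" "i < n" "\<not> z1 ! i" using i unfolding J_def by auto
      define x' where "x' = z1[i := True]"
      have xe: "z1[i := \<not> z1 ! i] = x'" using i1 by (simp add: x'_def)
      note fl = flip_second[OF i1(1,2) len i1(3)]
      have ac: "acc n 1 x' s"
        unfolding acc_def
      proof
        assume "\<exists>z\<in>?P. dom n 1 z x' \<or> F n 1 z = F n 1 x'"
        then obtain z where z: "z \<in> ?P" "dom n 1 z x' \<or> F n 1 z = F n 1 x'" by blast
        then have "f22 n x' \<le> f22 n z" using wd1 by blast
        then have "f22 n z = n div 2" using fl z1(2) f22_le[of n z] unfolding x'_def by simp
        then have "f11 n z \<le> BM n ?P" using BM_ge[OF fP(1) z(1) _ A] by simp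
        moreover have "f11 n x' \<le> f11 n z" using z(2) unfolding dom_def weakly_dom_def F1 by auto
        ultimately show False using fl z1(3) unfolding x'_def by simp
      qed
      then have xin: "x' \<in> pop 1 (update n 1 x' s)" using upd_pop_same[of 1 n x' s] by simp
      have so: "succ_ok n ?P x' (pop 1 (update n 1 x' s))" using succ_upd[OF inv] .
      then have f2: "finite (pop 1 (update n 1 x' s))" unfolding succ_ok_def by simp
      have a2: "AM n (pop 1 (update n 1 x' s)) = n div 2" using BM_mono[OF fP(1,2) so A] by simp
      have "f11 n x' \<le> BM n (pop 1 (update n 1 x' s))"
        using BM_ge[OF f2 xin _ a2] fl z1(2) unfolding x'_def by simp
      then have "BM n ?P + 1 \<le> BM n (pop 1 (update n 1 x' s))" using fl z1(3) unfolding x'_def by simp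
      then show ?thesis unfolding xe using gv_goodB[OF fP(1,2) so A B] by blast
    qed
    show ?thesis
      by (rule bexI[OF _ z1(1)], rule exI[of _ J], rule exI[of _ "n - n div 2 - BM n ?P"])
         (use cJ good B in \<open>auto simp: J_def\<close>)
  qed
qed

lemma drift1_real:
  assumes inv: "Inv n s" and nf: "\<not> found n s" and n: "n > 0"
  shows "(\<Sum>x\<in>pop 1 s. (\<Sum>i\<in>{..<n}. 2 * gv n (pop 1 (update n 1 (x[i := \<not> x ! i]) s)) + 1) / real n)
           / real (card (pop 1 s)) \<le> 2 * gv n (pop 1 s) - 1"
proof -
  let ?P = "pop 1 s"
  let ?\<phi> = "\<lambda>x i. gv n (pop 1 (update n 1 (x[i := \<not> x ! i]) s))"
  have fP: "finite ?P" "?P \<noteq> {}" using inv unfolding Inv_def by auto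
  obtain x0 J k where x0: "x0 \<in> ?P" "J \<subseteq> {..<n}" "card J = k" "k \<ge> 1"
    "\<forall>i\<in>J. ?\<phi> x0 i \<le> gv n ?P - cst n / real k"
    using good_exists[OF inv nf] by blast
  have mono: "\<forall>x\<in>?P. \<forall>i\<in>{..<n}. ?\<phi> x i \<le> gv n ?P"
    using gv_mono[OF fP succ_upd[OF inv]] by blast
  have S: "(\<Sum>x\<in>?P. \<Sum>i\<in>{..<n}. ?\<phi> x i) \<le> real (card ?P) * real (card {..<n}) * gv n ?P - cst n"
    by (rule avg_bound[OF fP(1) x0(1) finite_lessThan x0(2,3,4) mono x0(5)])
  have "card ?P \<le> n - n div 2 + 1" using card_pop1[OF inv] .
  then have "real (card ?P) * real n \<le> cst n" unfolding cst_def
    by (metis mult_right_mono of_nat_le_iff of_nat_mult of_nat_0_le_iff)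
  then show ?thesis using avg_final[OF fP n, of ?\<phi> "gv n ?P" "cst n"] S by simp
qed



lemma finite_ss: "finite (search_space n)"
  using finite_lists_length_eq[of "UNIV :: bool set" n] unfolding search_space_def by simp

lemma ne_ss: "search_space n \<noteq> {}"
  unfolding search_space_def by (metis (mono_tags) empty_iff length_replicate mem_Collect_eq)

lemma nn_pmf_of_set:
  assumes "finite S" "S \<noteq> {}" "\<And>x. x \<in> S \<Longrightarrow> f x \<ge> 0"
  shows "(\<integral>\<^sup>+x. ennreal (f x) \<partial>measure_pmf (pmf_of_set S)) = ennreal (sum f S / real (card S))"
proof -
  have "(\<integral>\<^sup>+x. ennreal (f x) \<partial>measure_pmf (pmf_of_set S)) = (\<Sum>x\<in>S. ennreal (f x)) / of_nat (card S)"
    using nn_integral_pmf_of_set[OF assms(2,1)] by simp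
  also have "\<dots> = ennreal (sum f S) / ennreal (real (card S))"
    using assms(3) by (simp add: ennreal_of_nat_eq_real_of_nat)
  also have "\<dots> = ennreal (sum f S / real (card S))"
    using assms by (intro divide_ennreal) (auto intro: sum_nonneg simp: card_gt_0_iff)
  finally show ?thesis .
qed

lemma Inv_pop:
  assumes "Inv n s" "m \<in> {1,2}"
  shows "finite (pop m s)" "pop m s \<noteq> {}" "pop m s \<subseteq> search_space n"
  using assms unfolding Inv_def by auto

lemma nn_party_step:
  assumes inv: "Inv n s" and m: "m \<in> {1,2}" and n: "n > 0" and f: "\<And>s'. f s' \<ge> 0"
  shows "(\<integral>\<^sup>+s'. ennreal (f s') \<partial>measure_pmf (party_step n m s)) =
    ennreal ((\<Sum>x\<in>pop m s. (\<Sum>i\<in>{..<n}. f (update n m (x[i := \<not> x ! i]) s)) / real n) / real (card (pop m s)))"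
proof -
  note P = Inv_pop[OF inv m]
  have "(\<integral>\<^sup>+s'. ennreal (f s') \<partial>measure_pmf (party_step n m s)) =
     (\<integral>\<^sup>+x. (\<integral>\<^sup>+i. ennreal (f (update n m (x[i := \<not> x ! i]) s)) \<partial>measure_pmf (pmf_of_set {..<n})) \<partial>measure_pmf (pmf_of_set (pop m s)))"
    unfolding party_step_def mutate_def by simp
  also have "\<dots> = (\<integral>\<^sup>+x. ennreal ((\<Sum>i\<in>{..<n}. f (update n m (x[i := \<not> x ! i]) s)) / real n) \<partial>measure_pmf (pmf_of_set (pop m s)))"
    using n f by (intro nn_integral_cong, subst nn_pmf_of_set) auto
  also have "\<dots> = ennreal ((\<Sum>x\<in>pop m s. (\<Sum>i\<in>{..<n}. f (update n m (x[i := \<not> x ! i]) s)) / real n) / real (card (pop m s)))"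
  proof -
    have fnn: "\<And>x. 0 \<le> (\<Sum>i\<in>{..<n}. f (update n m (x[i := \<not> x ! i]) s)) / real n"
      using f by (simp add: sum_nonneg)
    show ?thesis by (rule nn_pmf_of_set[OF P(1,2) fnn])
  qed
  finally show ?thesis .
qed

lemma set_party_step:
  assumes inv: "Inv n s" and m: "m \<in> {1,2}" and n: "n > 0" and s': "s' \<in> set_pmf (party_step n m s)"
  shows "\<exists>x\<in>pop m s. \<exists>i<n. s' = update n m (x[i := \<not> x ! i]) s"
proof -
  note P = Inv_pop[OF inv m]
  have e1: "set_pmf (pmf_of_set (pop m s)) = pop m s" using P by (intro set_pmf_of_set) auto
  have e2: "set_pmf (pmf_of_set {..<n}) = {..<n}" using n by (intro set_pmf_of_set) auto
  obtain x where x: "x \<in> pop m s" and s2: "s' \<in> set_pmf (map_pmf (\<lambda>x'. update n m x' s) (mutate n x))"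
    using s' unfolding party_step_def by (auto simp: e1)
  then obtain i where "i < n" "s' = update n m (x[i := \<not> x ! i]) s"
    unfolding mutate_def by (auto simp: e2)
  then show ?thesis using x by blast
qed

lemma Inv_party_step:
  assumes inv: "Inv n s" and m: "m \<in> {1,2}" and n: "n > 0" and s': "s' \<in> set_pmf (party_step n m s)"
  shows "Inv n s'"
proof -
  obtain x i where xi: "x \<in> pop m s" "i < n" "s' = update n m (x[i := \<not> x ! i]) s"
    using set_party_step[OF assms] by blast
  have "x[i := \<not> x ! i] \<in> search_space n" using xi Inv_pop[OF inv m] by (auto simp: search_space_def)
  then show ?thesis using Inv_update[OF inv m] xi by simp
qed

lemma supp_evals:
  assumes n: "n > 0"
  shows "p \<in> set_pmf (evals n t) \<Longrightarrow> Inv n (fst p) \<and> (found n (fst p) \<longrightarrow> snd p)"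
proof (induction t arbitrary: p)
  case 0
  then obtain x where x: "x \<in> search_space n" "p = (({x}, {x}, {x}), found n ({x}, {x}, {x}))"
    using finite_ss ne_ss by auto
  have "Inv n ({x}, {x}, {x})" using x unfolding Inv_def by (simp add: pop_def archive_def)
  then show ?case using x by simp
next
  case (Suc t)
  obtain s h where sh: "(s, h) \<in> set_pmf (evals n t)"
    and p: "p \<in> set_pmf (map_pmf (\<lambda>s'. (s', h \<or> found n s')) (party_step n (if even t then 1 else 2) s))"
    using Suc.prems by auto
  have I: "Inv n s" using Suc.IH[OF sh] by simp
  obtain s' where s': "s' \<in> set_pmf (party_step n (if even t then 1 else 2) s)" "p = (s', h \<or> found n s')"
    using p by auto
  have "Inv n s'" by (rule Inv_party_step[OF I _ n s'(1)]) simp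
  then show ?case using s' by simp
qed

definition K :: "nat \<Rightarrow> nat \<Rightarrow> state \<times> bool \<Rightarrow> ennreal" where
  "K n t p = (if snd p then 0 else ennreal (2 * gv n (pop 1 (fst p)) + (if even t then 0 else 1)))"

definition D :: "nat \<Rightarrow> nat \<Rightarrow> ennreal" where
  "D n t = (\<integral>\<^sup>+p. K n t p \<partial>measure_pmf (evals n t))"

lemma drift_point:
  assumes n: "n > 0" and inv: "Inv n s" and fh: "found n s \<longrightarrow> h"
  shows "(\<integral>\<^sup>+s'. K n (Suc t) (s', h \<or> found n s') \<partial>measure_pmf (party_step n (if even t then 1 else 2) s))
          + (if h then 0 else 1) \<le> K n t (s, h)"
proof (cases h)
  case True then show ?thesis by (simp add: K_def)
next
  case False
  then have nf: "\<not> found n s" using fh by simp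
  let ?P = "pop 1 s"
  show ?thesis
  proof (cases "even t")
    case ev: True
    have "(\<integral>\<^sup>+s'. K n (Suc t) (s', h \<or> found n s') \<partial>measure_pmf (party_step n 1 s))
        \<le> (\<integral>\<^sup>+s'. ennreal (2 * gv n (pop 1 s') + 1) \<partial>measure_pmf (party_step n 1 s))"
      using ev by (intro nn_integral_mono) (auto simp: K_def)
    also have "\<dots> = ennreal ((\<Sum>x\<in>pop 1 s. (\<Sum>i\<in>{..<n}. 2 * gv n (pop 1 (update n 1 (x[i := \<not> x ! i]) s)) + 1) / real n) / real (card (pop 1 s)))"
    proof (rule nn_party_step[OF inv _ n])
      show "\<And>s'. 0 \<le> 2 * gv n (pop 1 s') + 1" using gv_nonneg[of n] by (metis add_nonneg_nonneg mult_nonneg_nonneg zero_le_numeral zero_le_one)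
    qed simp
    also have "\<dots> \<le> ennreal (2 * gv n ?P - 1)"
      by (rule ennreal_leI, rule drift1_real[OF inv nf n])
    finally have Q: "(\<integral>\<^sup>+s'. K n (Suc t) (s', h \<or> found n s') \<partial>measure_pmf (party_step n 1 s))
        \<le> ennreal (2 * gv n ?P - 1)" .
    have nn: "0 \<le> (\<Sum>x\<in>pop 1 s. (\<Sum>i\<in>{..<n}. 2 * gv n (pop 1 (update n 1 (x[i := \<not> x ! i]) s)) + 1) / real n) / real (card (pop 1 s))"
      by (auto intro!: sum_nonneg divide_nonneg_nonneg add_nonneg_nonneg gv_nonneg)
    have g1: "2 * gv n ?P - 1 \<ge> 0" using drift1_real[OF inv nf n] nn by linarith
    have "ennreal (2 * gv n ?P - 1) + 1 = ennreal ((2 * gv n ?P - 1) + 1)"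
      using ennreal_plus[of "2 * gv n ?P - 1" 1] g1 by simp
    then have E: "ennreal (2 * gv n ?P - 1) + 1 = ennreal (2 * gv n ?P)" by simp
    have Kt: "K n t (s, h) = ennreal (2 * gv n ?P)" using False ev by (simp add: K_def)
    have m1: "(if even t then 1 else 2) = (1::nat)" using ev by simp
    have "(\<integral>\<^sup>+s'. K n (Suc t) (s', h \<or> found n s') \<partial>measure_pmf (party_step n 1 s)) + (if h then 0 else 1)
        = (\<integral>\<^sup>+s'. K n (Suc t) (s', h \<or> found n s') \<partial>measure_pmf (party_step n 1 s)) + 1"
      using False by simp
    also have "\<dots> \<le> ennreal (2 * gv n ?P - 1) + 1" using Q by (rule add_right_mono)
    finally show ?thesis unfolding m1 Kt E .
  next
    case od: False
    have c: "pop 1 s' = pop 1 s" if s': "s' \<in> set_pmf (party_step n 2 s)" for s'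
    proof -
      obtain x i where "s' = update n 2 (x[i := \<not> x ! i]) s"
        using set_party_step[OF inv _ n s'] by auto
      then show ?thesis using upd_pop_other[of 2 1 n "x[i := \<not> x ! i]" s] by simp
    qed
    have "(\<integral>\<^sup>+s'. K n (Suc t) (s', h \<or> found n s') \<partial>measure_pmf (party_step n 2 s))
        \<le> (\<integral>\<^sup>+s'. ennreal (2 * gv n (pop 1 s')) \<partial>measure_pmf (party_step n 2 s))"
      using od by (intro nn_integral_mono) (auto simp: K_def)
    also have "\<dots> = (\<integral>\<^sup>+s'. ennreal (2 * gv n ?P) \<partial>measure_pmf (party_step n 2 s))"
      by (intro nn_integral_cong_AE AE_pmfI) (metis c)
    also have "\<dots> = ennreal (2 * gv n ?P)" by (simp add: measure_pmf.emeasure_space_1)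
    finally have Q: "(\<integral>\<^sup>+s'. K n (Suc t) (s', h \<or> found n s') \<partial>measure_pmf (party_step n 2 s))
        \<le> ennreal (2 * gv n ?P)" .
    have E: "ennreal (2 * gv n ?P) + 1 = ennreal (2 * gv n ?P + 1)"
      using ennreal_plus[of "2 * gv n ?P" 1] gv_nonneg[of n ?P] by simp
    have Kt: "K n t (s, h) = ennreal (2 * gv n ?P + 1)" using False od by (simp add: K_def)
    have m1: "(if even t then 1 else 2) = (2::nat)" using od by simp
    have "(\<integral>\<^sup>+s'. K n (Suc t) (s', h \<or> found n s') \<partial>measure_pmf (party_step n 2 s)) + (if h then 0 else 1)
        = (\<integral>\<^sup>+s'. K n (Suc t) (s', h \<or> found n s') \<partial>measure_pmf (party_step n 2 s)) + 1"
      using False by simp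
    also have "\<dots> \<le> ennreal (2 * gv n ?P) + 1" using Q by (rule add_right_mono)
    finally show ?thesis unfolding m1 Kt E .
  qed
qed

lemma D_step:
  assumes n: "n > 0"
  shows "D n (Suc t) + emeasure (measure_pmf (evals n t)) {p. \<not> snd p} \<le> D n t"
proof -
  define Q where "Q p = (\<integral>\<^sup>+s'. K n (Suc t) (s', snd p \<or> found n s') \<partial>measure_pmf (party_step n (if even t then 1 else 2) (fst p)))" for p
  have "D n (Suc t) = (\<integral>\<^sup>+p. Q p \<partial>measure_pmf (evals n t))"
    unfolding D_def Q_def by (simp add: case_prod_unfold)
  moreover have "emeasure (measure_pmf (evals n t)) {p. \<not> snd p} = (\<integral>\<^sup>+p. indicator {p. \<not> snd p} p \<partial>measure_pmf (evals n t))"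
    by simp
  ultimately have "D n (Suc t) + emeasure (measure_pmf (evals n t)) {p. \<not> snd p}
     = (\<integral>\<^sup>+p. Q p + indicator {p. \<not> snd p} p \<partial>measure_pmf (evals n t))"
    by (simp add: nn_integral_add)
  also have "\<dots> \<le> (\<integral>\<^sup>+p. K n t p \<partial>measure_pmf (evals n t))"
  proof (intro nn_integral_mono_AE AE_pmfI)
    fix p assume p: "p \<in> set_pmf (evals n t)"
    obtain s h where sh: "p = (s, h)" by fastforce
    have "Inv n s" "found n s \<longrightarrow> h" using supp_evals[OF n p] sh by auto
    note dp = drift_point[OF n this, of t]
    have ind: "indicator {p. \<not> snd p} (s, h) = (if h then 0 else (1::ennreal))" by (simp add: indicator_def)
    show "Q p + indicator {p. \<not> snd p} p \<le> K n t p"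
      unfolding Q_def sh fst_conv snd_conv ind by (rule dp)
  qed
  finally show ?thesis unfolding D_def .
qed

lemma D_chain:
  assumes n: "n > 0"
  shows "D n N + (\<Sum>t<N. ennreal (measure_pmf.prob (evals n t) {p. \<not> snd p})) \<le> D n 0"
proof (induction N)
  case 0 then show ?case by simp
next
  case (Suc N)
  have "D n (Suc N) + (\<Sum>t<Suc N. ennreal (measure_pmf.prob (evals n t) {p. \<not> snd p}))
      = (D n (Suc N) + emeasure (measure_pmf (evals n N)) {p. \<not> snd p}) + (\<Sum>t<N. ennreal (measure_pmf.prob (evals n t) {p. \<not> snd p}))"
    by (simp add: measure_pmf.emeasure_eq_measure add_ac)
  also have "\<dots> \<le> D n N + (\<Sum>t<N. ennreal (measure_pmf.prob (evals n t) {p. \<not> snd p}))"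
    using D_step[OF n, of N] by (rule add_right_mono)
  also have "\<dots> \<le> D n 0" by (rule Suc.IH)
  finally show ?case .
qed

lemma runtime_le_D0:
  assumes n: "n > 0"
  shows "expected_runtime n \<le> D n 0"
  unfolding expected_runtime_def suminf_eq_SUP
proof (rule SUP_least)
  fix N
  have "(\<Sum>t<N. ennreal (measure_pmf.prob (evals n t) {p. \<not> snd p})) \<le>
     D n N + (\<Sum>t<N. ennreal (measure_pmf.prob (evals n t) {p. \<not> snd p}))"
    by (rule add_increasing[OF zero_le order_refl])
  also have "\<dots> \<le> D n 0" by (rule D_chain[OF n])
  finally show "(\<Sum>t<N. ennreal (measure_pmf.prob (evals n t) {p. \<not> snd p})) \<le> D n 0" .
qed

lemma D0_le: "D n 0 \<le> ennreal (2 * (cst n * (harm (n div 2) + harm (n - n div 2))))"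
proof -
  have "D n 0 \<le> (\<integral>\<^sup>+p. ennreal (2 * (cst n * (harm (n div 2) + harm (n - n div 2)))) \<partial>measure_pmf (evals n 0))"
    unfolding D_def K_def using gv_le_max
    by (intro nn_integral_mono) (auto intro!: ennreal_leI)
  also have "\<dots> = ennreal (2 * (cst n * (harm (n div 2) + harm (n - n div 2))))"
    by (simp add: measure_pmf.emeasure_space_1)
  finally show ?thesis .
qed



lemma final_arith:
  assumes n: "n \<ge> 3" "even n"
  shows "2 * (cst n * (harm (n div 2) + harm (n - n div 2))) \<le> 8 * real n ^ 2 * ln (real n)"
proof -
  define h where "h = n div 2"
  have hh: "n - n div 2 = h" "n = 2 * h" using n by (auto simp: h_def)
  have h1: "h \<ge> 1" using n hh by simp
  have hn: "real (h + 1) \<le> real n" using hh h1 by simp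
  have ln1: "1 \<le> ln (real n)"
  proof -
    have "exp 1 \<le> real n" using exp_le n(1) by linarith
    then show ?thesis using n by (subst ln_ge_iff) auto
  qed
  have lnh: "ln (real h) \<le> ln (real n)" using h1 hh by simp
  have H: "harm h \<le> 2 * ln (real n)" using harm_le_ln[OF h1] lnh ln1 by linarith
  have Hn: "0 \<le> (harm h :: real)" by (rule harm_nonneg)
  have "2 * (cst n * (harm (n div 2) + harm (n - n div 2))) = 4 * (real (h + 1) * real n) * harm h"
  proof -
    have e1: "cst n = real (h + 1) * real n" unfolding cst_def using hh(1) by (simp add: algebra_simps)
    have e2: "harm (n - n div 2) = (harm h :: real)" "harm (n div 2) = (harm h :: real)"
      using hh(1) h_def by auto
    show ?thesis unfolding e1 e2 by (simp add: algebra_simps)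
  qed
  also have "\<dots> \<le> 4 * (real n * real n) * (2 * ln (real n))"
    using hn H Hn by (intro mult_mono mult_left_mono) auto
  also have "\<dots> = 8 * real n ^ 2 * ln (real n)" by (simp add: power2_eq_square algebra_simps)
  finally show ?thesis .
qed

theorem theorem1:
  "\<exists>C N. \<forall>n\<ge>N. even n \<longrightarrow>
      expected_runtime n \<le> ennreal (C * real n ^ 2 * ln (real n))"
proof (intro exI allI impI)
  fix n :: nat assume n: "n \<ge> 3" "even n"
  have "expected_runtime n \<le> D n 0" using n by (intro runtime_le_D0) auto
  also have "\<dots> \<le> ennreal (2 * (cst n * (harm (n div 2) + harm (n - n div 2))))" by (rule D0_le)
  also have "\<dots> \<le> ennreal (8 * real n ^ 2 * ln (real n))" by (rule ennreal_leI, rule final_arith[OF n])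
  finally show "expected_runtime n \<le> ennreal (8 * real n ^ 2 * ln (real n))" .
qed

end
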